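(* Let $a<b$, $n\ge 1$, let $P_1=P_1^T\in\mathbb{R}^{n\times n}$ be invertible and $P_0=-P_0^T\in\mathbb{R}^{n\times n}$. Let $\mathcal{X}=L^2([a,b];\mathbb{R}^n)$ with the standard inner product $\langle\cdot,\cdot\rangle_{L^2}$, let $Z$ be a real Hilbert space, let $H\in\mathcal{L}(Z,\mathcal{X})$ and let $H^*\in\mathcal{L}(\mathcal{X},Z)$ be its adjoint. Fix a real number $\delta t>0$. For $e\in H^1([a,b];\mathbb{R}^n)$ put $\mathcal{J}e:=P_1\frac{de}{d\zeta}+P_0e$. On $\mathcal{B}=\mathcal{F}\times\mathcal{E}$ with $\mathcal{F}=\mathcal{E}=\mathcal{X}\times Z\times\mathbb{R}^n$, whose elements are written $(\delta f_\varepsilon,\delta f_w,\delta f_\partial,e_\varepsilon,e_w,e_\partial)$, consider the symmetric bilinear pairing $$\langle b^1,b^2\rangle_+=\langle e^1_\varepsilon,\delta f^2_\varepsilon\rangle_{L^2}+\langle e^2_\varepsilon,\delta f^1_\varepsilon\rangle_{L^2}-\langle e^1_\partial,\delta f^2_\partial\rangle_{\mathbb{R}^n}-\langle e^2_\partial,\delta f^1_\partial\rangle_{\mathbb{R}^n}-\langle e^1_w,\delta f^2_w\rangle_Z-\langle e^2_w,\delta f^1_w\rangle_Z.$$ Define $$\mathcal{D}=\Big\{(\delta f_\varepsilon,\delta f_w,\delta f_\partial,e_\varepsilon,e_w,e_\partial)\in\mathcal{B}:\ e_\varepsilon\in H^1([a,b];\mathbb{R}^n),\ \delta f_\varepsilon=\mathcal{J}e_\varepsilon\,\delta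 t+H\delta f_w,\ \delta f_\partial=\tfrac{1}{\sqrt2}P_1\big(e_\varepsilon(b)-e_\varepsilon(a)\big)\delta t,\ e_\partial=\tfrac{1}{\sqrt2}\big(e_\varepsilon(b)+e_\varepsilon(a)\big),\ e_w=H^*e_\varepsilon\Big\}.$$ Then $\mathcal{D}$ is a Dirac structure, i.e. $\mathcal{D}^\perp=\mathcal{D}$, where $\mathcal{D}^\perp=\{b\in\mathcal{B}:\langle b,v\rangle_+=0\ \text{for all } v\in\mathcal{D}\}$.
   Context: This is the port structure of a stochastic port-Hamiltonian system $\delta\varepsilon=\mathcal{A}\varepsilon\,\delta t+H(\varepsilon)\delta w$ (Stratonovich sense) with $\mathcal{A}\varepsilon=P_1\frac{\partial}{\partial\zeta}(\mathcal{H}\varepsilon)+P_0\mathcal{H}\varepsilon$; here $e_\varepsilon=\mathcal{H}\varepsilon$ is the effort, $\delta f_\varepsilon=\delta\varepsilon$ the flow, $\delta f_w=\delta w$ the noise flow, $e_w=H^*e_\varepsilon$ the noise effort, and $\delta f_\partial,e_\partial$ the boundary ports. The noise intensity operator is considered at a frozen state, i.e. as a fixed $H\in\mathcal{L}(Z,\mathcal{X})$, and the time increment $\delta t$ is treated as a fixed positive scalar. Equivalently, $\begin{pmatrix}\delta f_\partial\\ e_\partial\delta t\end{pmatrix}=R_0\begin{pmatrix}e_\varepsilon(b)\\ e_\varepsilon(a)\end{pmatrix}\delta t$ with $R_0=\frac{1}{\sqrt2}\begin{pmatrix}P_1&-P_1\\ I&I\end{pmatrix}$. *)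

theory Defs
  imports "HOL-Analysis.Analysis"
begin

text \<open>Elements of X = L2([a,b]; R^n) are represented by functions real => real^'n that are
  Lebesgue measurable on [a,b] and square integrable there; two representatives are
  identified when they agree almost everywhere on [a,b].  All definitions below are
  invariant under such a.e. modification.\<close>

definition L2 :: "real \<Rightarrow> real \<Rightarrow> (real \<Rightarrow> 'a::euclidean_space) \<Rightarrow> bool" where
  "L2 a b f \<longleftrightarrow> f \<in> borel_measurable (lebesgue_on {a..b})
      \<and> (\<lambda>x. (norm (f x))\<^sup>2) integrable_on {a..b}"

definition L2_inner :: "real \<Rightarrow> real \<Rightarrow> (real \<Rightarrow> 'a::euclidean_space) \<Rightarrow> (real \<Rightarrow> 'a) \<Rightarrow> real" where
  "L2_inner a b f g = integral {a..b} (\<lambda>x. f x \<bullet> g x)"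

definition aeq :: "real \<Rightarrow> real \<Rightarrow> (real \<Rightarrow> 'a) \<Rightarrow> (real \<Rightarrow> 'a) \<Rightarrow> bool" where
  "aeq a b f g \<longleftrightarrow> negligible {x \<in> {a..b}. f x \<noteq> g x}"

text \<open>e is in H1([a,b]; R^n) with (absolutely continuous) representative u and weak derivative u':
  u' in L2 and u x = u a + integral of u' over [a,x]; e = u a.e.\<close>
definition H1_rep :: "real \<Rightarrow> real \<Rightarrow> (real \<Rightarrow> 'a::euclidean_space) \<Rightarrow> (real \<Rightarrow> 'a) \<Rightarrow> (real \<Rightarrow> 'a) \<Rightarrow> bool" where
  "H1_rep a b e u u' \<longleftrightarrow> L2 a b u'
      \<and> (\<forall>x\<in>{a..b}. (u' has_integral (u x - u a)) {a..x})
      \<and> aeq a b e u"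

type_synonym ('n, 'z) bond =
  "(real \<Rightarrow> real^'n) \<times> 'z \<times> (real^'n) \<times> (real \<Rightarrow> real^'n) \<times> 'z \<times> (real^'n)"

definition bond_space :: "real \<Rightarrow> real \<Rightarrow> ('n::finite, 'z::real_inner) bond set" where
  "bond_space a b = {(f, fw, fd, e, ew, ed). L2 a b f \<and> L2 a b e}"

definition plus_pairing :: "real \<Rightarrow> real \<Rightarrow> ('n::finite, 'z::real_inner) bond \<Rightarrow> ('n, 'z) bond \<Rightarrow> real" where
  "plus_pairing a b v1 v2 = (case v1 of (f1, fw1, fd1, e1, ew1, ed1) \<Rightarrow>
      case v2 of (f2, fw2, fd2, e2, ew2, ed2) \<Rightarrow>
        L2_inner a b e1 f2 + L2_inner a b e2 f1 - ed1 \<bullet> fd2 - ed2 \<bullet> fd1 - ew1 \<bullet> fw2 - ew2 \<bullet> fw1)"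

definition orth_plus :: "real \<Rightarrow> real \<Rightarrow> ('n::finite, 'z::real_inner) bond set \<Rightarrow> ('n, 'z) bond set" where
  "orth_plus a b D = {v \<in> bond_space a b. \<forall>w\<in>D. plus_pairing a b v w = 0}"

definition sph_dirac :: "real \<Rightarrow> real \<Rightarrow> real^'n^'n \<Rightarrow> real^'n^'n \<Rightarrow> ('z \<Rightarrow> real \<Rightarrow> real^'n)
    \<Rightarrow> ((real \<Rightarrow> real^'n) \<Rightarrow> 'z) \<Rightarrow> real \<Rightarrow> ('n::finite, 'z::real_inner) bond set" where
  "sph_dirac a b P1 P0 H Hs dt = {(f, fw, fd, e, ew, ed). L2 a b f \<and> L2 a b e \<and>
      (\<exists>u u'. H1_rep a b e u u'
         \<and> aeq a b f (\<lambda>x. dt *\<^sub>R (P1 *v u' x + P0 *v u x) + H fw x)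
         \<and> fd = (dt / sqrt 2) *\<^sub>R (P1 *v (u b - u a))
         \<and> ed = (1 / sqrt 2) *\<^sub>R (u b + u a))
      \<and> ew = Hs e}"

end

theory Submission
  imports Defs
begin



lemma psf: "pair_sigma_finite (lebesgue_on {a..b::real}) (lebesgue_on {a..b})"
  unfolding pair_sigma_finite_def
  using finite_measure_lebesgue_on[of "{a..b}"] finite_measure.axioms(1) by auto

lemma meas_fst[measurable]: "(\<lambda>z. fst z::real) \<in> borel_measurable (lebesgue_on {a..b::real} \<Otimes>\<^sub>M lebesgue_on {c..d})"
  by (metis (no_types, lifting) ext measurable_completion measurable_fst''
    measurable_id measurable_lborel2 measurable_restrict_space1)
lemma meas_snd[measurable]: "(\<lambda>z. snd z::real) \<in> borel_measurable (lebesgue_on {a..b::real} \<Otimes>\<^sub>M lebesgue_on {c..d})"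
  by (metis (no_types, lifting) ext measurable_completion measurable_snd''
    measurable_id measurable_lborel2 measurable_restrict_space1)

lemma meas_id_leb[measurable]: "(\<lambda>x. x) \<in> borel_measurable (lebesgue_on S)"
  using id_borel_measurable_lebesgue_on by (simp add: id_def)

lemma inner_conv:
  fixes q :: "real \<Rightarrow> real"
  assumes q: "q absolutely_integrable_on {a..b}" and x: "x \<in> {a..b}"
  shows "(\<integral>y. (if y \<le> x then q y else 0) \<partial>lebesgue_on {a..b}) = integral {a..x} q"
    and "(\<integral>y. (if y < x then q y else 0) \<partial>lebesgue_on {a..b}) = integral {a..x} q"
proof -
  have qM: "integrable (lebesgue_on {a..b}) q"
    using absolutely_integrable_imp_integrable[OF q] by auto
  have qm[measurable]: "q \<in> borel_measurable (lebesgue_on {a..b})" using qM by auto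
  have i1: "integrable (lebesgue_on {a..b}) (\<lambda>y. if y \<le> x then q y else 0)"
    by (rule Bochner_Integration.integrable_bound[OF qM]) auto
  have i2: "integrable (lebesgue_on {a..b}) (\<lambda>y. if y < x then q y else 0)"
    by (rule Bochner_Integration.integrable_bound[OF qM]) auto
  have "integral {a..b} (\<lambda>y. if y \<le> x then q y else 0) = integral {a..b} (\<lambda>y. if y \<in> {a..x} then q y else 0)"
    by (rule integral_cong) auto
  also have "\<dots> = integral {a..x} q"
    using x integral_restrict_Int[of "{a..b}" "{a..x}" q] by (simp add: Int_absorb1 min_absorb1 del: atLeastAtMost_iff) (simp add: min_absorb1)
  finally have h1: "integral {a..b} (\<lambda>y. if y \<le> x then q y else 0) = integral {a..x} q" .
  show "(\<integral>y. (if y \<le> x then q y else 0) \<partial>lebesgue_on {a..b}) = integral {a..x} q"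
    using lebesgue_integral_eq_integral[OF i1] h1 by simp
  have "integral {a..b} (\<lambda>y. if y < x then q y else 0) = integral {a..b} (\<lambda>y. if y \<le> x then q y else 0)"
    by (rule integral_spike[where S="{x}"]) auto
  then show "(\<integral>y. (if y < x then q y else 0) \<partial>lebesgue_on {a..b}) = integral {a..x} q"
    using lebesgue_integral_eq_integral[OF i2] h1 by simp
qed

lemma ibp_scalar:
  fixes p q :: "real \<Rightarrow> real"
  assumes p: "p absolutely_integrable_on {a..b}" and q: "q absolutely_integrable_on {a..b}"
  shows "((\<lambda>x. p x * integral {a..x} q + q x * integral {a..x} p) has_integral
           (integral {a..b} p * integral {a..b} q)) {a..b}"
proof -
  define M where "M = lebesgue_on {a..b}"
  interpret P: pair_sigma_finite M M using psf M_def by simp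
  have pM: "integrable M p"
    using absolutely_integrable_imp_integrable[OF p] M_def by auto
  have qM: "integrable M q"
    using absolutely_integrable_imp_integrable[OF q] M_def by auto
  have pm[measurable]: "p \<in> borel_measurable M" using pM by auto
  have qm[measurable]: "q \<in> borel_measurable M" using qM by auto
  have fm[measurable]: "fst \<in> borel_measurable (M \<Otimes>\<^sub>M M)" "snd \<in> borel_measurable (M \<Otimes>\<^sub>M M)"
    using meas_fst meas_snd M_def by auto
  define F where "F = (\<lambda>z::real\<times>real. p (fst z) * q (snd z))"
  have Fm[measurable]: "F \<in> borel_measurable (M \<Otimes>\<^sub>M M)" unfolding F_def by measurable
  have Fi: "integrable (M \<Otimes>\<^sub>M M) F"
  proof (rule P.Fubini_integrable)
    show "integrable M (\<lambda>x. \<integral>y. norm (F (x, y)) \<partial>M)"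
      unfolding F_def using pM qM by (simp add: abs_mult)
    show "AE x in M. integrable M (\<lambda>y. F (x, y))"
      unfolding F_def using qM by simp
  qed simp
  define F1 where "F1 = (\<lambda>z::real\<times>real. (if snd z \<le> fst z then 1 else 0) * F z)"
  define F2 where "F2 = (\<lambda>z::real\<times>real. (if fst z < snd z then 1 else 0) * F z)"
  have F1i: "integrable (M \<Otimes>\<^sub>M M) F1"
    by (rule Bochner_Integration.integrable_bound[OF Fi]) (auto simp: F1_def)
  have F2i: "integrable (M \<Otimes>\<^sub>M M) F2"
    by (rule Bochner_Integration.integrable_bound[OF Fi]) (auto simp: F2_def)
  have FF: "F = (\<lambda>z. F1 z + F2 z)"
    by (auto simp: F1_def F2_def fun_eq_iff)
  have intF: "integral\<^sup>L (M \<Otimes>\<^sub>M M) F = integral\<^sup>L M p * integral\<^sup>L M q"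
    using P.integral_fst'[OF Fi, symmetric] by (simp add: F_def)
  have in1: "(\<integral>y. F1 (x, y) \<partial>M) = p x * integral {a..x} q" if "x \<in> space M" for x
  proof -
    have "(\<integral>y. F1 (x, y) \<partial>M) = (\<integral>y. p x * (if y \<le> x then q y else 0) \<partial>M)"
      by (rule Bochner_Integration.integral_cong) (auto simp: F1_def F_def)
    also have "\<dots> = p x * (\<integral>y. (if y \<le> x then q y else 0) \<partial>M)"
      by simp
    also have "\<dots> = p x * integral {a..x} q"
      using inner_conv(1)[OF q, of x] that M_def by simp
    finally show ?thesis .
  qed
  have in2: "(\<integral>x. F2 (x, y) \<partial>M) = q y * integral {a..y} p" if "y \<in> space M" for y
  proof -
    have "(\<integral>x. F2 (x, y) \<partial>M) = (\<integral>x. q y * (if x < y then p x else 0) \<partial>M)"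
      by (rule Bochner_Integration.integral_cong) (auto simp: F2_def F_def)
    also have "\<dots> = q y * (\<integral>x. (if x < y then p x else 0) \<partial>M)"
      by simp
    also have "\<dots> = q y * integral {a..y} p"
      using inner_conv(2)[OF p, of y] that M_def by simp
    finally show ?thesis .
  qed
  have G1: "integrable M (\<lambda>x. p x * integral {a..x} q)"
  proof -
    have "integrable M (\<lambda>x. LINT y|M. F1 (x,y)) = integrable M (\<lambda>x. p x * integral {a..x} q)"
      by (rule Bochner_Integration.integrable_cong) (simp_all add: in1)
    then show ?thesis using P.integrable_fst'[OF F1i] by simp
  qed
  have G2: "integrable M (\<lambda>y. q y * integral {a..y} p)"
  proof -
    have "integrable M (\<lambda>y. LINT x|M. F2 (x,y)) = integrable M (\<lambda>y. q y * integral {a..y} p)"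
      by (rule Bochner_Integration.integrable_cong) (simp_all add: in2)
    then show ?thesis using P.integrable_snd[of "\<lambda>x y. F2 (x, y)"] F2i by simp
  qed
  have I1: "integral\<^sup>L (M \<Otimes>\<^sub>M M) F1 = (\<integral>x. p x * integral {a..x} q \<partial>M)"
  proof -
    have "(\<integral>x. (\<integral>y. F1 (x,y) \<partial>M) \<partial>M) = (\<integral>x. p x * integral {a..x} q \<partial>M)"
      by (rule Bochner_Integration.integral_cong) (simp_all add: in1)
    then show ?thesis using P.integral_fst'[OF F1i] by simp
  qed
  have I2: "integral\<^sup>L (M \<Otimes>\<^sub>M M) F2 = (\<integral>y. q y * integral {a..y} p \<partial>M)"
  proof -
    have "(\<integral>y. (\<integral>x. F2 (x,y) \<partial>M) \<partial>M) = (\<integral>y. q y * integral {a..y} p \<partial>M)"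
      by (rule Bochner_Integration.integral_cong) (simp_all add: in2)
    then show ?thesis using P.integral_snd[of "\<lambda>x y. F2 (x, y)"] F2i by simp
  qed
  have E1: "(\<integral>x. p x * integral {a..x} q + q x * integral {a..x} p \<partial>M) = integral\<^sup>L M p * integral\<^sup>L M q"
    using G1 G2 I1 I2 intF FF F1i F2i by simp
  have Gi: "integrable (lebesgue_on {a..b}) (\<lambda>x. p x * integral {a..x} q + q x * integral {a..x} p)"
    using G1 G2 M_def by simp
  have E2: "integral\<^sup>L M p = integral {a..b} p" "integral\<^sup>L M q = integral {a..b} q"
    using lebesgue_integral_eq_integral[of "{a..b}" p] lebesgue_integral_eq_integral[of "{a..b}" q] pM qM M_def by auto
  have "((\<lambda>x. p x * integral {a..x} q + q x * integral {a..x} p) has_integral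
     (\<integral>x. p x * integral {a..x} q + q x * integral {a..x} p \<partial>M)) {a..b}"
    using has_integral_integral_lebesgue_on[OF Gi] M_def by simp
  then show ?thesis unfolding E1 E2 .
qed

lemma ibp_vec:
  fixes u w u' w' :: "real \<Rightarrow> real^'n"
  assumes u': "u' absolutely_integrable_on {a..b}" and w': "w' absolutely_integrable_on {a..b}"
    and hu: "\<forall>x\<in>{a..b}. (u' has_integral (u x - u a)) {a..x}"
    and hw: "\<forall>x\<in>{a..b}. (w' has_integral (w x - w a)) {a..x}"
    and ab: "a \<le> b"
  shows "((\<lambda>x. u' x \<bullet> w x + u x \<bullet> w' x) has_integral (u b \<bullet> w b - u a \<bullet> w a)) {a..b}"
proof -
  have comp: "((\<lambda>x. u' x $ i * w x $ i + u x $ i * w' x $ i) has_integral (u b $ i * w b $ i - u a $ i * w a $ i)) {a..b}" for i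
  proof -
    have pi: "(\<lambda>x. u' x $ i) absolutely_integrable_on {a..b}"
      using u' absolutely_integrable_on_iff_component[of "{a..b}" u'] by simp
    have qi: "(\<lambda>x. w' x $ i) absolutely_integrable_on {a..b}"
      using w' absolutely_integrable_on_iff_component[of "{a..b}" w'] by simp
    have Ui: "integral {a..x} (\<lambda>t. u' t $ i) = u x $ i - u a $ i" if "x \<in> {a..b}" for x
      using has_integral_linear[OF hu[rule_format, OF that] bounded_linear_vec_nth[of i]]
      by (simp add: o_def integral_unique)
    have Wi: "integral {a..x} (\<lambda>t. w' t $ i) = w x $ i - w a $ i" if "x \<in> {a..b}" for x
      using has_integral_linear[OF hw[rule_format, OF that] bounded_linear_vec_nth[of i]]
      by (simp add: o_def integral_unique)
    have a_in: "a \<in> {a..b}" "b \<in> {a..b}" using ab by auto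
    have S: "((\<lambda>x. u' x $ i * integral {a..x} (\<lambda>t. w' t $ i) + w' x $ i * integral {a..x} (\<lambda>t. u' t $ i)) has_integral
           (integral {a..b} (\<lambda>t. u' t $ i) * integral {a..b} (\<lambda>t. w' t $ i))) {a..b}"
      by (rule ibp_scalar[OF pi qi])
    have S': "((\<lambda>x. u' x $ i * (w x $ i - w a $ i) + w' x $ i * (u x $ i - u a $ i)) has_integral
           ((u b $ i - u a $ i) * (w b $ i - w a $ i))) {a..b}"
    proof -
      have eq: "u' x $ i * integral {a..x} (\<lambda>t. w' t $ i) + w' x $ i * integral {a..x} (\<lambda>t. u' t $ i)
          = u' x $ i * (w x $ i - w a $ i) + w' x $ i * (u x $ i - u a $ i)" if "x \<in> {a..b}" for x
        using Ui[OF that] Wi[OF that] by simp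
      have r: "integral {a..b} (\<lambda>t. u' t $ i) * integral {a..b} (\<lambda>t. w' t $ i) = (u b $ i - u a $ i) * (w b $ i - w a $ i)"
        using Ui[OF a_in(2)] Wi[OF a_in(2)] by simp
      show ?thesis using S unfolding r by (rule has_integral_spike_finite[where S="{}", rotated 2]) (auto simp: eq)
    qed
    have C1: "((\<lambda>x. u' x $ i * w a $ i) has_integral ((u b $ i - u a $ i) * w a $ i)) {a..b}"
      using has_integral_mult_left[OF has_integral_linear[OF hu[rule_format, OF a_in(2)] bounded_linear_vec_nth[of i]]]
      by (simp add: o_def)
    have C2: "((\<lambda>x. w' x $ i * u a $ i) has_integral ((w b $ i - w a $ i) * u a $ i)) {a..b}"
      using has_integral_mult_left[OF has_integral_linear[OF hw[rule_format, OF a_in(2)] bounded_linear_vec_nth[of i]]]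
      by (simp add: o_def)
    have "((\<lambda>x. u' x $ i * (w x $ i - w a $ i) + w' x $ i * (u x $ i - u a $ i) + u' x $ i * w a $ i + w' x $ i * u a $ i) has_integral
           ((u b $ i - u a $ i) * (w b $ i - w a $ i) + (u b $ i - u a $ i) * w a $ i + (w b $ i - w a $ i) * u a $ i)) {a..b}"
      by (intro has_integral_add S' C1 C2)
    moreover have "(u b $ i - u a $ i) * (w b $ i - w a $ i) + (u b $ i - u a $ i) * w a $ i + (w b $ i - w a $ i) * u a $ i
       = u b $ i * w b $ i - u a $ i * w a $ i" by (simp add: algebra_simps)
    moreover have "(\<lambda>x. u' x $ i * (w x $ i - w a $ i) + w' x $ i * (u x $ i - u a $ i) + u' x $ i * w a $ i + w' x $ i * u a $ i)
       = (\<lambda>x. u' x $ i * w x $ i + u x $ i * w' x $ i)" by (simp add: fun_eq_iff algebra_simps)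
    ultimately show ?thesis by simp
  qed
  have "((\<lambda>x. \<Sum>i\<in>UNIV. u' x $ i * w x $ i + u x $ i * w' x $ i) has_integral (\<Sum>i\<in>UNIV. u b $ i * w b $ i - u a $ i * w a $ i)) {a..b}"
    by (intro has_integral_sum comp) auto
  then show ?thesis
    by (simp add: inner_vec_def sum.distrib sum_subtractf)
qed



lemma L2_meas: "L2 a b f \<Longrightarrow> f \<in> borel_measurable (lebesgue_on {a..b})"
  by (simp add: L2_def)

lemma le_1_sq: "(t::real) \<le> 1 + t\<^sup>2"
proof -
  have "0 \<le> (t - 1/2)\<^sup>2" by simp
  then show ?thesis by (simp add: power2_eq_square algebra_simps)
qed

lemma prod_le_sq: "s * t \<le> s\<^sup>2 + (t::real)\<^sup>2"
proof -
  have "0 \<le> (s - t)\<^sup>2" by simp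
  hence "2*(s*t) \<le> s\<^sup>2 + t\<^sup>2" by (simp add: power2_eq_square algebra_simps)
  moreover have "0 \<le> s\<^sup>2 + t\<^sup>2" by simp
  ultimately show ?thesis by linarith
qed

lemma L2_absint:
  fixes f :: "real \<Rightarrow> 'a::euclidean_space"
  assumes "L2 a b f" shows "f absolutely_integrable_on {a..b}"
proof (rule measurable_bounded_by_integrable_imp_absolutely_integrable)
  show "f \<in> borel_measurable (lebesgue_on {a..b})" using assms by (simp add: L2_def)
  show "(\<lambda>x. 1 + (norm (f x))\<^sup>2) integrable_on {a..b}"
    using assms unfolding L2_def by (intro integrable_add) auto
  show "norm (f x) \<le> 1 + (norm (f x))\<^sup>2" for x by (rule le_1_sq)
qed auto

lemma L2_integrable:
  fixes f :: "real \<Rightarrow> 'a::euclidean_space"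
  assumes "L2 a b f" shows "f integrable_on {a..b}"
  using L2_absint[OF assms] set_lebesgue_integral_eq_integral(1) by blast

lemma L2_bound:
  fixes f :: "real \<Rightarrow> 'a::euclidean_space" and g :: "real \<Rightarrow> 'b::euclidean_space"
  assumes g: "g \<in> borel_measurable (lebesgue_on {a..b})" and f: "L2 a b f"
    and bd: "\<And>x. x \<in> {a..b} \<Longrightarrow> norm (g x) \<le> C * norm (f x)"
  shows "L2 a b g"
  unfolding L2_def
proof
  show "g \<in> borel_measurable (lebesgue_on {a..b})" by fact
  show "(\<lambda>x. (norm (g x))\<^sup>2) integrable_on {a..b}"
  proof (rule measurable_bounded_by_integrable_imp_integrable)
    show "(\<lambda>x. (norm (g x))\<^sup>2) \<in> borel_measurable (lebesgue_on {a..b})"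
      using g by measurable
    show "(\<lambda>x. C\<^sup>2 * (norm (f x))\<^sup>2) integrable_on {a..b}"
      using integrable_cmul[of "\<lambda>x. (norm (f x))\<^sup>2" "{a..b}" "C\<^sup>2"] f by (simp add: L2_def)
    show "norm ((norm (g x))\<^sup>2) \<le> C\<^sup>2 * (norm (f x))\<^sup>2" if "x \<in> {a..b}" for x
    proof -
      have "norm (g x) \<le> C * norm (f x)" using bd[OF that] .
      then have "(norm (g x))\<^sup>2 \<le> (C * norm (f x))\<^sup>2"
        by (intro power_mono) auto
      then show ?thesis by (simp add: power_mult_distrib)
    qed
  qed auto
qed

lemma L2_add:
  fixes f g :: "real \<Rightarrow> 'a::euclidean_space"
  assumes f: "L2 a b f" and g: "L2 a b g"
  shows "L2 a b (\<lambda>x. f x + g x)"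
  unfolding L2_def
proof
  have [measurable]: "f \<in> borel_measurable (lebesgue_on {a..b})" "g \<in> borel_measurable (lebesgue_on {a..b})"
    using f g by (auto simp: L2_def)
  show "(\<lambda>x. f x + g x) \<in> borel_measurable (lebesgue_on {a..b})" by measurable
  show "(\<lambda>x. (norm (f x + g x))\<^sup>2) integrable_on {a..b}"
  proof (rule measurable_bounded_by_integrable_imp_integrable)
    show "(\<lambda>x. (norm (f x + g x))\<^sup>2) \<in> borel_measurable (lebesgue_on {a..b})"
      by measurable
    show "(\<lambda>x. 2 * (norm (f x))\<^sup>2 + 2 * (norm (g x))\<^sup>2) integrable_on {a..b}"
      using f g unfolding L2_def by (intro integrable_add integrable_on_cmult_left) auto
    show "norm ((norm (f x + g x))\<^sup>2) \<le> 2 * (norm (f x))\<^sup>2 + 2 * (norm (g x))\<^sup>2" for x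
    proof -
      have "norm (f x + g x) \<le> norm (f x) + norm (g x)" by (rule norm_triangle_ineq)
      then have "(norm (f x + g x))\<^sup>2 \<le> (norm (f x) + norm (g x))\<^sup>2"
        by (intro power_mono) auto
      also have "\<dots> \<le> 2 * (norm (f x))\<^sup>2 + 2 * (norm (g x))\<^sup>2"
        using zero_le_power2[of "norm (f x) - norm (g x)"] by (simp add: power2_eq_square algebra_simps)
      finally show ?thesis by simp
    qed
  qed auto
qed

lemma L2_scale:
  fixes f :: "real \<Rightarrow> 'a::euclidean_space"
  assumes f: "L2 a b f" shows "L2 a b (\<lambda>x. c *\<^sub>R f x)"
proof (rule L2_bound[OF _ f, of _ "\<bar>c\<bar>"])
  have [measurable]: "f \<in> borel_measurable (lebesgue_on {a..b})" using f by (auto simp: L2_def)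
  show "(\<lambda>x. c *\<^sub>R f x) \<in> borel_measurable (lebesgue_on {a..b})" by measurable
qed simp

lemma L2_diff:
  fixes f g :: "real \<Rightarrow> 'a::euclidean_space"
  assumes f: "L2 a b f" and g: "L2 a b g"
  shows "L2 a b (\<lambda>x. f x - g x)"
  using L2_add[OF f L2_scale[OF g, of "-1"]] by simp

lemma L2_mat:
  fixes f :: "real \<Rightarrow> real^'n" and P :: "real^'n^'m"
  assumes f: "L2 a b f" shows "L2 a b (\<lambda>x. P *v f x)"
proof -
  obtain K where K: "\<And>x. norm (P *v x) \<le> norm x * K"
    using bounded_linear.bounded[OF matrix_vector_mul_bounded_linear[of P]] by blast
  have [measurable]: "f \<in> borel_measurable (lebesgue_on {a..b})" using f by (auto simp: L2_def)
  have c: "continuous_on UNIV ((*v) P)"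
    by (intro bounded_linear.continuous_on[OF matrix_vector_mul_bounded_linear] continuous_on_id)
  show ?thesis
  proof (rule L2_bound[OF _ f, of _ K])
    show "(\<lambda>x. P *v f x) \<in> borel_measurable (lebesgue_on {a..b})"
      using borel_measurable_continuous_on[OF c, of f] by simp
    show "norm (P *v f x) \<le> K * norm (f x)" for x using K[of "f x"] by (simp add: mult.commute)
  qed
qed

lemma L2_cont:
  fixes f :: "real \<Rightarrow> 'a::euclidean_space"
  assumes "continuous_on {a..b} f" shows "L2 a b f"
  unfolding L2_def
proof
  show "f \<in> borel_measurable (lebesgue_on {a..b})"
    by (rule continuous_imp_measurable_on_sets_lebesgue[OF assms]) auto
  have "continuous_on {a..b} (\<lambda>x. (norm (f x))\<^sup>2)"
    by (intro continuous_intros assms)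
  then show "(\<lambda>x. (norm (f x))\<^sup>2) integrable_on {a..b}"
    by (rule integrable_continuous_interval)
qed

lemma L2_zero: "L2 a b (\<lambda>x. 0::'a::euclidean_space)"
  by (rule L2_cont) simp

lemma L2_inner_absint:
  fixes f g :: "real \<Rightarrow> 'a::euclidean_space"
  assumes f: "L2 a b f" and g: "L2 a b g"
  shows "(\<lambda>x. f x \<bullet> g x) absolutely_integrable_on {a..b}"
proof (rule measurable_bounded_by_integrable_imp_absolutely_integrable)
  have [measurable]: "f \<in> borel_measurable (lebesgue_on {a..b})" "g \<in> borel_measurable (lebesgue_on {a..b})"
    using f g by (auto simp: L2_def)
  show "(\<lambda>x. f x \<bullet> g x) \<in> borel_measurable (lebesgue_on {a..b})" by measurable
  show "(\<lambda>x. (norm (f x))\<^sup>2 + (norm (g x))\<^sup>2) integrable_on {a..b}"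
    using f g unfolding L2_def by (intro integrable_add) auto
  show "norm (f x \<bullet> g x) \<le> (norm (f x))\<^sup>2 + (norm (g x))\<^sup>2" for x
  proof -
    have "norm (f x \<bullet> g x) \<le> norm (f x) * norm (g x)"
      using Cauchy_Schwarz_ineq2 by simp
    also have "\<dots> \<le> (norm (f x))\<^sup>2 + (norm (g x))\<^sup>2"
      by (rule prod_le_sq)
    finally show ?thesis .
  qed
qed auto

lemma L2_inner_int:
  fixes f g :: "real \<Rightarrow> 'a::euclidean_space"
  assumes f: "L2 a b f" and g: "L2 a b g"
  shows "(\<lambda>x. f x \<bullet> g x) integrable_on {a..b}"
  using L2_inner_absint[OF f g] set_lebesgue_integral_eq_integral(1) by blast

lemma L2_inner_add_right:
  fixes f g h :: "real \<Rightarrow> 'a::euclidean_space"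
  assumes f: "L2 a b f" and g: "L2 a b g" and h: "L2 a b h"
  shows "L2_inner a b f (\<lambda>x. g x + h x) = L2_inner a b f g + L2_inner a b f h"
  unfolding L2_inner_def
  using integral_add[OF L2_inner_int[OF f g] L2_inner_int[OF f h]] by (simp add: inner_add_right)

lemma L2_inner_diff_right:
  fixes f g h :: "real \<Rightarrow> 'a::euclidean_space"
  assumes f: "L2 a b f" and g: "L2 a b g" and h: "L2 a b h"
  shows "L2_inner a b f (\<lambda>x. g x - h x) = L2_inner a b f g - L2_inner a b f h"
  unfolding L2_inner_def
  using integral_diff[OF L2_inner_int[OF f g] L2_inner_int[OF f h]] by (simp add: inner_diff_right)

lemma L2_inner_scale_right:
  "L2_inner a b f (\<lambda>x. c *\<^sub>R g x) = c * L2_inner a b f g"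
  unfolding L2_inner_def by simp

lemma L2_inner_commute: "L2_inner a b f g = L2_inner a b g f"
  unfolding L2_inner_def by (simp add: inner_commute)

lemma L2_inner_aeq_right:
  assumes "aeq a b g h" shows "L2_inner a b f g = L2_inner a b f h"
  unfolding L2_inner_def
  by (rule integral_spike[of "{x \<in> {a..b}. g x \<noteq> h x}"]) (use assms in \<open>auto simp: aeq_def\<close>)

lemma L2_inner_aeq_left:
  assumes "aeq a b g h" shows "L2_inner a b g f = L2_inner a b h f"
  using L2_inner_aeq_right[OF assms] L2_inner_commute by metis

lemma inner_mat: "x \<bullet> (P *v y) = (transpose P *v x) \<bullet> (y::real^'n)"
  by (simp add: dot_lmul_matrix[symmetric])



lemma int_zero_negligible:
  fixes h :: "real \<Rightarrow> real"
  assumes hi: "h integrable_on {a..b}" and hn: "\<And>x. x \<in> {a..b} \<Longrightarrow> 0 \<le> h x"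
    and h0: "integral {a..b} h = 0"
  shows "negligible {x \<in> {a..b}. h x \<noteq> 0}"
proof -
  have ha: "h absolutely_integrable_on {a..b}"
    by (rule nonnegative_absolutely_integrable_1[OF hi hn])
  have hM: "integrable (lebesgue_on {a..b}) h"
    using absolutely_integrable_imp_integrable[OF ha] by simp
  have "integral\<^sup>L (lebesgue_on {a..b}) h = 0"
    using lebesgue_integral_eq_integral[OF hM] h0 by simp
  moreover have "AE x in lebesgue_on {a..b}. 0 \<le> h x"
    using hn by (intro AE_I2) auto
  ultimately have "AE x in lebesgue_on {a..b}. h x = 0"
    using integral_nonneg_eq_0_iff_AE[OF hM] by simp
  then have "AE x in lebesgue. x \<in> {a..b} \<longrightarrow> h x = 0"
    by (subst (asm) AE_restrict_space_iff) auto
  then obtain N where N: "negligible N" "{x. \<not> (x \<in> {a..b} \<longrightarrow> h x = 0)} \<subseteq> N"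
    unfolding eventually_ae_filter_negligible by blast
  show ?thesis by (rule negligible_subset[OF N(1)]) (use N(2) in auto)
qed

lemma H1_cont:
  fixes u u' :: "real \<Rightarrow> 'a::euclidean_space"
  assumes "L2 a b u'" "\<forall>x\<in>{a..b}. (u' has_integral (u x - u a)) {a..x}"
  shows "continuous_on {a..b} u"
proof -
  have "continuous_on {a..b} (\<lambda>x. u a + integral {a..x} u')"
    by (rule continuous_on_add[OF continuous_on_const indefinite_integral_continuous_1[OF L2_integrable[OF assms(1)]]])
  moreover have "u a + integral {a..x} u' = u x" if "x \<in> {a..b}" for x
    using integral_unique[OF assms(2)[rule_format, OF that]] by simp
  ultimately show ?thesis by (rule continuous_on_eq)
qed

lemma indef_rep:
  fixes \<phi> :: "real \<Rightarrow> 'a::euclidean_space"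
  assumes "L2 a b \<phi>"
  shows "\<forall>x\<in>{a..b}. (\<phi> has_integral ((c + integral {a..x} \<phi>) - (c + integral {a..a} \<phi>))) {a..x}"
proof
  fix x assume x: "x \<in> {a..b}"
  have "\<phi> integrable_on {a..x}"
    by (rule integrable_subinterval_real[OF L2_integrable[OF assms]]) (use x in auto)
  then show "(\<phi> has_integral ((c + integral {a..x} \<phi>) - (c + integral {a..a} \<phi>))) {a..x}"
    by (simp add: integrable_integral)
qed

lemma inner_P_sym:
  fixes P :: "real^'n^'n"
  assumes "transpose P = P"
  shows "x \<bullet> (P *v y) = y \<bullet> (P *v x)"
  using inner_mat[of x P y] assms by (simp add: inner_commute)

lemma inner_P_skew:
  fixes P :: "real^'n^'n"
  assumes "transpose P = - P"
  shows "x \<bullet> (P *v y) = - (y \<bullet> (P *v x))"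
proof -
  have n: "(- P) *v x = - (P *v x)"
    by (simp add: matrix_vector_mult_def vec_eq_iff sum_negf)
  show ?thesis using inner_mat[of x P y] assms by (simp add: inner_commute n)
qed

lemma ibp_J:
  fixes u1 u2 u1' u2' :: "real \<Rightarrow> real^'n" and P1 P0 :: "real^'n^'n"
  assumes P1: "transpose P1 = P1" and P0: "transpose P0 = - P0" and ab: "a \<le> b"
    and L1: "L2 a b u1'" and L2': "L2 a b u2'"
    and r1: "\<forall>x\<in>{a..b}. (u1' has_integral (u1 x - u1 a)) {a..x}"
    and r2: "\<forall>x\<in>{a..b}. (u2' has_integral (u2 x - u2 a)) {a..x}"
  shows "L2_inner a b u1 (\<lambda>x. P1 *v u2' x + P0 *v u2 x) + L2_inner a b u2 (\<lambda>x. P1 *v u1' x + P0 *v u1 x)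
    = u1 b \<bullet> (P1 *v u2 b) - u1 a \<bullet> (P1 *v u2 a)"
proof -
  have Lu1: "L2 a b u1" by (rule L2_cont[OF H1_cont[OF L1 r1]])
  have Lu2: "L2 a b u2" by (rule L2_cont[OF H1_cont[OF L2' r2]])
  have J1: "L2 a b (\<lambda>x. P1 *v u1' x + P0 *v u1 x)" by (intro L2_add L2_mat L1 Lu1)
  have J2: "L2 a b (\<lambda>x. P1 *v u2' x + P0 *v u2 x)" by (intro L2_add L2_mat L2' Lu2)
  have hw: "\<forall>x\<in>{a..b}. ((\<lambda>x. P1 *v u2' x) has_integral ((P1 *v u2 x) - (P1 *v u2 a))) {a..x}"
  proof
    fix x assume "x \<in> {a..b}"
    from has_integral_linear[OF r2[rule_format, OF this] matrix_vector_mul_bounded_linear[of P1]]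
    show "((\<lambda>x. P1 *v u2' x) has_integral ((P1 *v u2 x) - (P1 *v u2 a))) {a..x}"
      by (simp add: o_def matrix_vector_mult_diff_distrib)
  qed
  have I: "((\<lambda>x. u1' x \<bullet> (P1 *v u2 x) + u1 x \<bullet> (P1 *v u2' x)) has_integral (u1 b \<bullet> (P1 *v u2 b) - u1 a \<bullet> (P1 *v u2 a))) {a..b}"
    by (rule ibp_vec[OF L2_absint[OF L1] L2_absint[OF L2_mat[OF L2']] r1 hw ab])
  have pt: "u1 x \<bullet> (P1 *v u2' x + P0 *v u2 x) + u2 x \<bullet> (P1 *v u1' x + P0 *v u1 x)
      = u1' x \<bullet> (P1 *v u2 x) + u1 x \<bullet> (P1 *v u2' x)" for x
    using inner_P_sym[OF P1, of "u2 x" "u1' x"] inner_P_skew[OF P0, of "u2 x" "u1 x"]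
    by (simp add: inner_add_right)
  have "L2_inner a b u1 (\<lambda>x. P1 *v u2' x + P0 *v u2 x) + L2_inner a b u2 (\<lambda>x. P1 *v u1' x + P0 *v u1 x)
     = integral {a..b} (\<lambda>x. u1 x \<bullet> (P1 *v u2' x + P0 *v u2 x) + u2 x \<bullet> (P1 *v u1' x + P0 *v u1 x))"
  proof -
    have i1: "(\<lambda>x. u1 x \<bullet> (P1 *v u2' x + P0 *v u2 x)) integrable_on {a..b}" by (rule L2_inner_int[OF Lu1 J2])
    have i2: "(\<lambda>x. u2 x \<bullet> (P1 *v u1' x + P0 *v u1 x)) integrable_on {a..b}" by (rule L2_inner_int[OF Lu2 J1])
    show ?thesis unfolding L2_inner_def using integral_add[OF i1 i2] by simp
  qed
  also have "\<dots> = u1 b \<bullet> (P1 *v u2 b) - u1 a \<bullet> (P1 *v u2 a)"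
    unfolding pt using I by (rule integral_unique)
  finally show ?thesis .
qed

lemma bdry_alg:
  fixes P1 :: "real^'n^'n"
  assumes P1: "transpose P1 = P1"
  shows "dt * (x1 \<bullet> (P1 *v y1) - x0 \<bullet> (P1 *v y0))
     - ((1 / sqrt 2) *\<^sub>R (x1 + x0)) \<bullet> ((dt / sqrt 2) *\<^sub>R (P1 *v (y1 - y0)))
     - ((1 / sqrt 2) *\<^sub>R (y1 + y0)) \<bullet> ((dt / sqrt 2) *\<^sub>R (P1 *v (x1 - x0))) = 0"
proof -
  have s: "(1 / sqrt 2) * (dt / sqrt 2) = dt / 2" by (simp add: field_simps)
  have e1: "y1 \<bullet> (P1 *v x1) = x1 \<bullet> (P1 *v y1)" "y1 \<bullet> (P1 *v x0) = x0 \<bullet> (P1 *v y1)"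
    "y0 \<bullet> (P1 *v x1) = x1 \<bullet> (P1 *v y0)" "y0 \<bullet> (P1 *v x0) = x0 \<bullet> (P1 *v y0)"
    by (rule inner_P_sym[OF P1])+
  show ?thesis
    by (simp add: s e1 inner_add_left inner_add_right inner_diff_right inner_diff_left matrix_vector_mult_diff_distrib matrix_vector_right_distrib algebra_simps)
qed



lemma sph_mem: "((f, fw, fd, e, ew, ed) \<in> sph_dirac a b P1 P0 H Hs dt) \<longleftrightarrow>
   L2 a b f \<and> L2 a b e \<and>
      (\<exists>u u'. H1_rep a b e u u'
         \<and> aeq a b f (\<lambda>x. dt *\<^sub>R (P1 *v u' x + P0 *v u x) + H fw x)
         \<and> fd = (dt / sqrt 2) *\<^sub>R (P1 *v (u b - u a))
         \<and> ed = (1 / sqrt 2) *\<^sub>R (u b + u a))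
      \<and> ew = Hs e"
  by (simp add: sph_dirac_def)

lemma pair_tup: "plus_pairing a b (f1, fw1, fd1, e1, ew1, ed1) (f2, fw2, fd2, e2, ew2, ed2) =
   L2_inner a b e1 f2 + L2_inner a b e2 f1 - ed1 \<bullet> fd2 - ed2 \<bullet> fd1 - ew1 \<bullet> fw2 - ew2 \<bullet> fw1"
  by (simp add: plus_pairing_def)

lemma bond_mem: "((f, fw, fd, e, ew, ed) \<in> bond_space a b) \<longleftrightarrow> L2 a b f \<and> L2 a b e"
  by (simp add: bond_space_def)


lemma alg2:
  fixes s dt A B E :: real
  assumes s: "s * s = 2" "s > 0" and dt: "dt > 0"
    and h: "dt * A - (dt / s) * E - (1 / s) * ((dt / s) * (A - B)) = 0"
  shows "A + B = s * E"
proof -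
  have "s * s * (dt * A - (dt / s) * E - (1 / s) * ((dt / s) * (A - B))) = 0" using h by simp
  moreover have e1: "s * s * ((dt / s) * E) = s * dt * E" using s(2) by (simp add: field_simps)
  moreover have e2: "s * s * ((1 / s) * ((dt / s) * (A - B))) = dt * (A - B)" using s(2) by (simp add: field_simps)
  ultimately have "s * s * dt * A - s * dt * E - dt * (A - B) = 0" by (simp only: right_diff_distrib mult.assoc)
  then have "2 * dt * A - s * dt * E - dt * (A - B) = 0" using s(1) by simp
  then have "dt * ((A + B) - s * E) = 0" by (simp add: algebra_simps)
  then show ?thesis using dt by simp
qed
lemma two_sqrt: "(1 / sqrt 2) * 2 = sqrt (2::real)"
  using real_div_sqrt[of 2] by simp

theorem theorem2:
  fixes a b dt :: real
    and P1 P0 :: "real^'n^'n"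
    and H :: "'z::{real_inner, complete_space} \<Rightarrow> real \<Rightarrow> real^'n"
    and Hs :: "(real \<Rightarrow> real^'n) \<Rightarrow> 'z"
  assumes ab: "a < b"
    and P1_sym: "transpose P1 = P1" and P1_inv: "invertible P1"
    and P0_skew: "transpose P0 = - P0"
    and H_range: "\<forall>z. L2 a b (H z)"
    and H_add: "\<forall>z1 z2. aeq a b (H (z1 + z2)) (\<lambda>x. H z1 x + H z2 x)"
    and H_scale: "\<forall>c z. aeq a b (H (c *\<^sub>R z)) (\<lambda>x. c *\<^sub>R H z x)"
    and H_bounded: "\<exists>K. \<forall>z. sqrt (L2_inner a b (H z) (H z)) \<le> K * norm z"
    and Hs_adj: "\<forall>e. L2 a b e \<longrightarrow> (\<forall>z. Hs e \<bullet> z = L2_inner a b e (H z))"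
    and dt: "dt > 0"
  shows "orth_plus a b (sph_dirac a b P1 P0 H Hs dt) = sph_dirac a b P1 P0 H Hs dt"
proof -
  have ab': "a \<le> b" using ab by simp
  have LH: "L2 a b (H z)" for z using H_range by simp
  have Hs0: "Hs (\<lambda>x. 0) = 0"
  proof -
    have "Hs (\<lambda>x. 0) \<bullet> z = 0" for z
      using Hs_adj[rule_format, OF L2_zero[of a b], of z] by (simp add: L2_inner_def)
    from this[of "Hs (\<lambda>x. 0)"] show ?thesis by simp
  qed
  have Lf: "L2_inner a b e f = dt * L2_inner a b e (\<lambda>x. P1 *v u' x + P0 *v u x) + Hs e \<bullet> fw"
    if "L2 a b e" "L2 a b u'" "\<forall>x\<in>{a..b}. (u' has_integral (u x - u a)) {a..x}"
       "aeq a b f (\<lambda>x. dt *\<^sub>R (P1 *v u' x + P0 *v u x) + H fw x)" for e f fw u u'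
  proof -
    have Lu: "L2 a b u" by (rule L2_cont[OF H1_cont[OF that(2,3)]])
    have LJ: "L2 a b (\<lambda>x. P1 *v u' x + P0 *v u x)" by (rule L2_add[OF L2_mat[OF that(2)] L2_mat[OF Lu]])
    have "L2_inner a b e f = L2_inner a b e (\<lambda>x. dt *\<^sub>R (P1 *v u' x + P0 *v u x) + H fw x)"
      by (rule L2_inner_aeq_right[OF that(4)])
    also have "\<dots> = L2_inner a b e (\<lambda>x. dt *\<^sub>R (P1 *v u' x + P0 *v u x)) + L2_inner a b e (H fw)"
      by (rule L2_inner_add_right[OF that(1) L2_scale[OF LJ] LH])
    also have "\<dots> = dt * L2_inner a b e (\<lambda>x. P1 *v u' x + P0 *v u x) + Hs e \<bullet> fw"
      using Hs_adj that(1) by (simp add: L2_inner_scale_right)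
    finally show ?thesis .
  qed
  show ?thesis
  proof (rule equalityI)
    show "sph_dirac a b P1 P0 H Hs dt \<subseteq> orth_plus a b (sph_dirac a b P1 P0 H Hs dt)"
    proof
      fix v assume vD: "v \<in> sph_dirac a b P1 P0 H Hs dt"
      obtain f1 fw1 fd1 e1 ew1 ed1 where v: "v = (f1, fw1, fd1, e1, ew1, ed1)" by (cases v) auto
      from vD[unfolded v sph_mem] obtain u1 u1' where
        Lf1: "L2 a b f1" and Le1: "L2 a b e1" and rep1: "H1_rep a b e1 u1 u1'"
        and af1: "aeq a b f1 (\<lambda>x. dt *\<^sub>R (P1 *v u1' x + P0 *v u1 x) + H fw1 x)"
        and fd1: "fd1 = (dt / sqrt 2) *\<^sub>R (P1 *v (u1 b - u1 a))"
        and ed1: "ed1 = (1 / sqrt 2) *\<^sub>R (u1 b + u1 a)" and ew1: "ew1 = Hs e1" by blast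
      have Lu1': "L2 a b u1'" and r1: "\<forall>x\<in>{a..b}. (u1' has_integral (u1 x - u1 a)) {a..x}"
        and ae1: "aeq a b e1 u1" using rep1 by (auto simp: H1_rep_def)
      have "plus_pairing a b v w = 0" if wD: "w \<in> sph_dirac a b P1 P0 H Hs dt" for w
      proof -
        obtain f2 fw2 fd2 e2 ew2 ed2 where w: "w = (f2, fw2, fd2, e2, ew2, ed2)" by (cases w) auto
        from wD[unfolded w sph_mem] obtain u2 u2' where
          Lf2: "L2 a b f2" and Le2: "L2 a b e2" and rep2: "H1_rep a b e2 u2 u2'"
          and af2: "aeq a b f2 (\<lambda>x. dt *\<^sub>R (P1 *v u2' x + P0 *v u2 x) + H fw2 x)"
          and fd2: "fd2 = (dt / sqrt 2) *\<^sub>R (P1 *v (u2 b - u2 a))"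
          and ed2: "ed2 = (1 / sqrt 2) *\<^sub>R (u2 b + u2 a)" and ew2: "ew2 = Hs e2" by blast
        have Lu2': "L2 a b u2'" and r2: "\<forall>x\<in>{a..b}. (u2' has_integral (u2 x - u2 a)) {a..x}"
          and ae2: "aeq a b e2 u2" using rep2 by (auto simp: H1_rep_def)
        have p1: "L2_inner a b e1 f2 = dt * L2_inner a b u1 (\<lambda>x. P1 *v u2' x + P0 *v u2 x) + Hs e1 \<bullet> fw2"
          using Lf[OF Le1 Lu2' r2 af2] L2_inner_aeq_left[OF ae1] by simp
        have p2: "L2_inner a b e2 f1 = dt * L2_inner a b u2 (\<lambda>x. P1 *v u1' x + P0 *v u1 x) + Hs e2 \<bullet> fw1"
          using Lf[OF Le2 Lu1' r1 af1] L2_inner_aeq_left[OF ae2] by simp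
        have I: "L2_inner a b u1 (\<lambda>x. P1 *v u2' x + P0 *v u2 x) + L2_inner a b u2 (\<lambda>x. P1 *v u1' x + P0 *v u1 x)
          = u1 b \<bullet> (P1 *v u2 b) - u1 a \<bullet> (P1 *v u2 a)"
          by (rule ibp_J[OF P1_sym P0_skew ab' Lu1' Lu2' r1 r2])
        have "plus_pairing a b v w = dt * (u1 b \<bullet> (P1 *v u2 b) - u1 a \<bullet> (P1 *v u2 a)) - ed1 \<bullet> fd2 - ed2 \<bullet> fd1"
          unfolding v w pair_tup p1 p2 ew1 ew2 I[symmetric] by (simp add: algebra_simps)
        also have "\<dots> = 0"
          unfolding ed1 fd2 ed2 fd1 by (rule bdry_alg[OF P1_sym])
        finally show ?thesis .
      qed
      then show "v \<in> orth_plus a b (sph_dirac a b P1 P0 H Hs dt)"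
        unfolding orth_plus_def using Lf1 Le1 by (simp add: v bond_mem)
    qed
  next
    show "orth_plus a b (sph_dirac a b P1 P0 H Hs dt) \<subseteq> sph_dirac a b P1 P0 H Hs dt"
    proof
      fix v assume vO: "v \<in> orth_plus a b (sph_dirac a b P1 P0 H Hs dt)"
      obtain f1 fw1 fd1 e1 ew1 ed1 where v: "v = (f1, fw1, fd1, e1, ew1, ed1)" by (cases v) auto
      have Lf1: "L2 a b f1" and Le1: "L2 a b e1" using vO by (auto simp: orth_plus_def v bond_mem)
      have orth: "plus_pairing a b v w = 0" if "w \<in> sph_dirac a b P1 P0 H Hs dt" for w
        using vO that by (auto simp: orth_plus_def)
      have ew1: "ew1 = Hs e1"
      proof -
        have H0: "H1_rep a b (\<lambda>x. 0) (\<lambda>x. 0) (\<lambda>x. 0::real^'n)"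
          by (simp add: H1_rep_def L2_zero aeq_def)
        have wz: "(H z, z, 0, (\<lambda>x. 0), Hs (\<lambda>x. 0), 0) \<in> sph_dirac a b P1 P0 H Hs dt" for z
          unfolding sph_mem
          apply (intro conjI LH L2_zero)
           apply (rule exI[of _ "\<lambda>x. 0"], rule exI[of _ "\<lambda>x. 0"])
           apply (simp add: H0 aeq_def)
          apply simp
          done
        have "L2_inner a b e1 (H z) - ew1 \<bullet> z = 0" for z
          using orth[OF wz[of z]] by (simp add: v pair_tup Hs0 L2_inner_def)
        then have "(Hs e1 - ew1) \<bullet> z = 0" for z
          using Hs_adj Le1 by (simp add: inner_diff_left)
        from this[of "Hs e1 - ew1"] show ?thesis by simp
      qed
      define U where "U = (\<lambda>(\<phi>::real \<Rightarrow> real^'n) c x. c + integral {a..x} \<phi>)"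
      have Ua: "U \<phi> c a = c" for \<phi> c by (simp add: U_def)
      have Urep: "\<forall>x\<in>{a..b}. (\<phi> has_integral (U \<phi> c x - U \<phi> c a)) {a..x}" if "L2 a b \<phi>" for \<phi> c
        unfolding U_def by (rule indef_rep[OF that])
      have LU: "L2 a b (U \<phi> c)" if "L2 a b \<phi>" for \<phi> c
        by (rule L2_cont[OF H1_cont[OF that Urep[OF that]]])
      have E: "dt * L2_inner a b e1 (\<lambda>x. P1 *v \<phi> x + P0 *v U \<phi> c x) + L2_inner a b (U \<phi> c) f1
          - L2_inner a b (U \<phi> c) (H fw1) - ed1 \<bullet> ((dt / sqrt 2) *\<^sub>R (P1 *v (U \<phi> c b - U \<phi> c a)))
          - ((1 / sqrt 2) *\<^sub>R (U \<phi> c b + U \<phi> c a)) \<bullet> fd1 = 0"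
        if L\<phi>: "L2 a b \<phi>" for \<phi> c
      proof -
        have r: "\<forall>x\<in>{a..b}. (\<phi> has_integral (U \<phi> c x - U \<phi> c a)) {a..x}" by (rule Urep[OF L\<phi>])
        have Lu: "L2 a b (U \<phi> c)" by (rule LU[OF L\<phi>])
        define f2 where "f2 = (\<lambda>x. dt *\<^sub>R (P1 *v \<phi> x + P0 *v U \<phi> c x) + H 0 x)"
        have Lf2: "L2 a b f2" unfolding f2_def
          by (rule L2_add[OF L2_scale[OF L2_add[OF L2_mat[OF L\<phi>] L2_mat[OF Lu]]] LH])
        have af2: "aeq a b f2 (\<lambda>x. dt *\<^sub>R (P1 *v \<phi> x + P0 *v U \<phi> c x) + H 0 x)"
          by (simp add: aeq_def f2_def)
        have rep: "H1_rep a b (U \<phi> c) (U \<phi> c) \<phi>"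
          using L\<phi> r by (simp add: H1_rep_def aeq_def)
        have wD: "(f2, 0, (dt / sqrt 2) *\<^sub>R (P1 *v (U \<phi> c b - U \<phi> c a)), U \<phi> c, Hs (U \<phi> c),
             (1 / sqrt 2) *\<^sub>R (U \<phi> c b + U \<phi> c a)) \<in> sph_dirac a b P1 P0 H Hs dt"
          unfolding sph_mem using Lf2 Lu rep af2 by blast
        have p1: "L2_inner a b e1 f2 = dt * L2_inner a b e1 (\<lambda>x. P1 *v \<phi> x + P0 *v U \<phi> c x)"
          using Lf[OF Le1 L\<phi> r af2] by simp
        have p2: "Hs (U \<phi> c) \<bullet> fw1 = L2_inner a b (U \<phi> c) (H fw1)"
          using Hs_adj Lu by simp
        show ?thesis
          using orth[OF wD] unfolding v pair_tup p1 p2 by simp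
      qed
      define g where "g = (\<lambda>x. (1/dt) *\<^sub>R (f1 x - H fw1 x))"
      define k where "k = (\<lambda>x. g x - P0 *v e1 x)"
      define K where "K = (\<lambda>x. integral {a..x} k)"
      have Lg: "L2 a b g" unfolding g_def by (rule L2_scale[OF L2_diff[OF Lf1 LH]])
      have Lk: "L2 a b k" unfolding k_def by (rule L2_diff[OF Lg L2_mat[OF Le1]])
      have Ka: "K a = 0" by (simp add: K_def)
      have Krep: "\<forall>x\<in>{a..b}. (k has_integral (K x - K a)) {a..x}"
        using indef_rep[OF Lk, of 0] by (simp add: K_def)
      have LK: "L2 a b K" by (rule L2_cont[OF H1_cont[OF Lk Krep]])
      define m where "m = (\<lambda>x. P1 *v e1 x - K x)"
      have Lm: "L2 a b m" unfolding m_def by (rule L2_diff[OF L2_mat[OF Le1] LK])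
      have dgf: "dt *\<^sub>R g x = f1 x - H fw1 x" for x using dt by (simp add: g_def)
      have orthm: "integral {a..b} (\<lambda>x. m x \<bullet> \<phi> x) = 0"
        if L\<phi>: "L2 a b \<phi>" and \<phi>0: "integral {a..b} \<phi> = 0" for \<phi>
      proof -
        let ?u = "U \<phi> 0"
        have ub: "?u b = 0" "?u a = 0" using \<phi>0 by (simp_all add: U_def)
        have Lu: "L2 a b ?u" by (rule LU[OF L\<phi>])
        have r: "\<forall>x\<in>{a..b}. (\<phi> has_integral (?u x - ?u a)) {a..x}" by (rule Urep[OF L\<phi>])
        have LJ: "L2 a b (\<lambda>x. P1 *v \<phi> x + P0 *v ?u x)" by (rule L2_add[OF L2_mat[OF L\<phi>] L2_mat[OF Lu]])
        have E0: "dt * L2_inner a b e1 (\<lambda>x. P1 *v \<phi> x + P0 *v ?u x) + L2_inner a b ?u f1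
          - L2_inner a b ?u (H fw1) = 0"
          using E[OF L\<phi>, of 0] ub by simp
        have s1: "L2_inner a b ?u f1 - L2_inner a b ?u (H fw1) = dt * L2_inner a b ?u g"
        proof -
          have "L2_inner a b ?u f1 - L2_inner a b ?u (H fw1) = L2_inner a b ?u (\<lambda>x. f1 x - H fw1 x)"
            by (rule L2_inner_diff_right[OF Lu Lf1 LH, symmetric])
          also have "\<dots> = L2_inner a b ?u (\<lambda>x. dt *\<^sub>R g x)" by (simp add: dgf)
          finally show ?thesis by (simp add: L2_inner_scale_right)
        qed
        have S0: "L2_inner a b e1 (\<lambda>x. P1 *v \<phi> x + P0 *v ?u x) + L2_inner a b ?u g = 0"
        proof -
          have "dt * (L2_inner a b e1 (\<lambda>x. P1 *v \<phi> x + P0 *v ?u x) + L2_inner a b ?u g) =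
            dt * L2_inner a b e1 (\<lambda>x. P1 *v \<phi> x + P0 *v ?u x) + (L2_inner a b ?u f1 - L2_inner a b ?u (H fw1))"
            unfolding s1 by (simp only: distrib_left)
          also have "\<dots> = 0" using E0 by linarith
          finally show ?thesis using dt by simp
        qed
        have i1: "(\<lambda>x. e1 x \<bullet> (P1 *v \<phi> x + P0 *v ?u x)) integrable_on {a..b}" by (rule L2_inner_int[OF Le1 LJ])
        have i2: "(\<lambda>x. ?u x \<bullet> g x) integrable_on {a..b}" by (rule L2_inner_int[OF Lu Lg])
        have A: "integral {a..b} (\<lambda>x. (P1 *v e1 x) \<bullet> \<phi> x + ?u x \<bullet> k x) = 0"
        proof -
          have pt: "e1 x \<bullet> (P1 *v \<phi> x + P0 *v ?u x) + ?u x \<bullet> g x = (P1 *v e1 x) \<bullet> \<phi> x + ?u x \<bullet> k x" for x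
            using inner_P_sym[OF P1_sym, of "e1 x" "\<phi> x"] inner_P_skew[OF P0_skew, of "e1 x" "?u x"]
            by (simp add: k_def inner_add_right inner_diff_right inner_commute)
          have "integral {a..b} (\<lambda>x. e1 x \<bullet> (P1 *v \<phi> x + P0 *v ?u x) + ?u x \<bullet> g x) = 0"
            using S0 integral_add[OF i1 i2] by (simp add: L2_inner_def)
          then show ?thesis unfolding pt .
        qed
        have B: "((\<lambda>x. \<phi> x \<bullet> K x + ?u x \<bullet> k x) has_integral 0) {a..b}"
          using ibp_vec[OF L2_absint[OF L\<phi>] L2_absint[OF Lk] r Krep ab'] ub Ka by simp
        have iA: "(\<lambda>x. (P1 *v e1 x) \<bullet> \<phi> x + ?u x \<bullet> k x) integrable_on {a..b}"
          by (rule integrable_add[OF L2_inner_int[OF L2_mat[OF Le1] L\<phi>] L2_inner_int[OF Lu Lk]])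
        have "integral {a..b} (\<lambda>x. ((P1 *v e1 x) \<bullet> \<phi> x + ?u x \<bullet> k x) - (\<phi> x \<bullet> K x + ?u x \<bullet> k x)) = 0"
          using integral_diff[OF iA has_integral_integrable[OF B]] A integral_unique[OF B] by simp
        moreover have "((P1 *v e1 x) \<bullet> \<phi> x + ?u x \<bullet> k x) - (\<phi> x \<bullet> K x + ?u x \<bullet> k x) = m x \<bullet> \<phi> x" for x
          by (simp add: m_def inner_diff_left inner_commute[of "\<phi> x"])
        ultimately show ?thesis by simp
      qed
      define cm where "cm = (1 / (b - a)) *\<^sub>R integral {a..b} m"
      have Lc: "L2 a b (\<lambda>x. cm)" by (rule L2_cont) simp
      have L0: "L2 a b (\<lambda>x. m x - cm)" by (rule L2_diff[OF Lm Lc])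
      have int0: "integral {a..b} (\<lambda>x. m x - cm) = 0"
      proof -
        have "integral {a..b} (\<lambda>x. m x - cm) = integral {a..b} m - integral {a..b} (\<lambda>x. cm)"
          by (rule integral_diff[OF L2_integrable[OF Lm] L2_integrable[OF Lc]])
        also have "\<dots> = 0" using ab by (simp add: cm_def)
        finally show ?thesis .
      qed
      have o1: "integral {a..b} (\<lambda>x. m x \<bullet> (m x - cm)) = 0" by (rule orthm[OF L0 int0])
      have o2: "integral {a..b} (\<lambda>x. cm \<bullet> (m x - cm)) = 0"
        using integral_linear[OF L2_integrable[OF L0] bounded_linear_inner_right[of cm]] int0
        by (simp add: o_def)
      have o3: "integral {a..b} (\<lambda>x. (m x - cm) \<bullet> (m x - cm)) = 0"
      proof -
        have "integral {a..b} (\<lambda>x. (m x - cm) \<bullet> (m x - cm)) =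
            integral {a..b} (\<lambda>x. m x \<bullet> (m x - cm)) - integral {a..b} (\<lambda>x. cm \<bullet> (m x - cm))"
          unfolding inner_diff_left[of _ cm]
          by (rule integral_diff[OF L2_inner_int[OF Lm L0] L2_inner_int[OF Lc L0]])
        then show ?thesis using o1 o2 by simp
      qed
      have negm: "negligible {x \<in> {a..b}. m x \<noteq> cm}"
      proof -
        have "negligible {x \<in> {a..b}. (m x - cm) \<bullet> (m x - cm) \<noteq> 0}"
          by (rule int_zero_negligible[OF L2_inner_int[OF L0 L0] _ o3]) simp
        then show ?thesis by simp
      qed
      obtain Pi where Pi: "P1 ** Pi = mat 1" "Pi ** P1 = mat 1"
        using P1_inv unfolding invertible_def by blast
      define u1 where "u1 = (\<lambda>x. Pi *v (K x + cm))"
      define u1' where "u1' = (\<lambda>x. Pi *v k x)"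
      have Lu1': "L2 a b u1'" unfolding u1'_def by (rule L2_mat[OF Lk])
      have r1: "\<forall>x\<in>{a..b}. (u1' has_integral (u1 x - u1 a)) {a..x}"
      proof
        fix x assume x: "x \<in> {a..b}"
        have "u1 x - u1 a = Pi *v (K x - K a)"
          by (simp add: u1_def matrix_vector_mult_diff_distrib[symmetric])
        with has_integral_linear[OF Krep[rule_format, OF x] matrix_vector_mul_bounded_linear[of Pi]]
        show "(u1' has_integral (u1 x - u1 a)) {a..x}" by (simp add: o_def u1'_def)
      qed
      have eu: "e1 x = u1 x" if "m x = cm" for x
      proof -
        have "P1 *v e1 x = K x + cm" using that by (simp add: m_def algebra_simps)
        then have "Pi *v (P1 *v e1 x) = u1 x" by (simp add: u1_def)
        then show ?thesis by (simp add: matrix_vector_mul_assoc Pi)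
      qed
      have ae1: "aeq a b e1 u1"
        unfolding aeq_def by (rule negligible_subset[OF negm]) (use eu in auto)
      have rep1: "H1_rep a b e1 u1 u1'" using Lu1' r1 ae1 by (simp add: H1_rep_def)
      have fu: "f1 x = dt *\<^sub>R (P1 *v u1' x + P0 *v u1 x) + H fw1 x" if "e1 x = u1 x" for x
      proof -
        have "P1 *v u1' x = k x" by (simp add: u1'_def matrix_vector_mul_assoc Pi)
        then have "P1 *v u1' x + P0 *v u1 x = g x" using that by (simp add: k_def)
        then show ?thesis using dgf[of x] by simp
      qed
      have af1: "aeq a b f1 (\<lambda>x. dt *\<^sub>R (P1 *v u1' x + P0 *v u1 x) + H fw1 x)"
        unfolding aeq_def by (rule negligible_subset[OF negm]) (use eu fu in auto)
      have af1': "aeq a b (\<lambda>x. f1 x - H fw1 x) (\<lambda>x. dt *\<^sub>R (P1 *v u1' x + P0 *v u1 x))"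
        unfolding aeq_def by (rule negligible_subset[OF negm]) (use eu fu in auto)
      have BD: "dt * (u1 b \<bullet> (P1 *v U \<phi> c b) - u1 a \<bullet> (P1 *v U \<phi> c a))
          - ed1 \<bullet> ((dt / sqrt 2) *\<^sub>R (P1 *v (U \<phi> c b - U \<phi> c a)))
          - ((1 / sqrt 2) *\<^sub>R (U \<phi> c b + U \<phi> c a)) \<bullet> fd1 = 0"
        if L\<phi>: "L2 a b \<phi>" for \<phi> c
      proof -
        have Lu: "L2 a b (U \<phi> c)" by (rule LU[OF L\<phi>])
        have q1: "L2_inner a b e1 (\<lambda>x. P1 *v \<phi> x + P0 *v U \<phi> c x) = L2_inner a b u1 (\<lambda>x. P1 *v \<phi> x + P0 *v U \<phi> c x)"
          by (rule L2_inner_aeq_left[OF ae1])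
        have q2: "L2_inner a b (U \<phi> c) f1 - L2_inner a b (U \<phi> c) (H fw1) = dt * L2_inner a b (U \<phi> c) (\<lambda>x. P1 *v u1' x + P0 *v u1 x)"
        proof -
          have "L2_inner a b (U \<phi> c) f1 - L2_inner a b (U \<phi> c) (H fw1) = L2_inner a b (U \<phi> c) (\<lambda>x. f1 x - H fw1 x)"
            by (rule L2_inner_diff_right[OF Lu Lf1 LH, symmetric])
          also have "\<dots> = L2_inner a b (U \<phi> c) (\<lambda>x. dt *\<^sub>R (P1 *v u1' x + P0 *v u1 x))"
            by (rule L2_inner_aeq_right[OF af1'])
          finally show ?thesis by (simp add: L2_inner_scale_right)
        qed
        have I: "L2_inner a b u1 (\<lambda>x. P1 *v \<phi> x + P0 *v U \<phi> c x) + L2_inner a b (U \<phi> c) (\<lambda>x. P1 *v u1' x + P0 *v u1 x)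
          = u1 b \<bullet> (P1 *v U \<phi> c b) - u1 a \<bullet> (P1 *v U \<phi> c a)"
          by (rule ibp_J[OF P1_sym P0_skew ab' Lu1' L\<phi> r1 Urep[OF L\<phi>]])
        have "dt * (u1 b \<bullet> (P1 *v U \<phi> c b) - u1 a \<bullet> (P1 *v U \<phi> c a)) =
          dt * L2_inner a b e1 (\<lambda>x. P1 *v \<phi> x + P0 *v U \<phi> c x) + (L2_inner a b (U \<phi> c) f1 - L2_inner a b (U \<phi> c) (H fw1))"
          unfolding q1 q2 I[symmetric] by (simp only: distrib_left)
        then show ?thesis using E[OF L\<phi>, of c] by linarith
      qed
      have s2: "sqrt 2 * sqrt 2 = (2::real)" "sqrt 2 > (0::real)" by simp_all
      have fd1_eq: "fd1 = (dt / sqrt 2) *\<^sub>R (P1 *v (u1 b - u1 a))"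
      proof -
        have c1: "dt * ((u1 b - u1 a) \<bullet> (P1 *v \<alpha>)) = sqrt 2 * (\<alpha> \<bullet> fd1)" for \<alpha>
        proof -
          have Uc: "U (\<lambda>x. 0) \<alpha> = (\<lambda>x. \<alpha>)" by (simp add: U_def fun_eq_iff)
          have h: "dt * (u1 b \<bullet> (P1 *v \<alpha>) - u1 a \<bullet> (P1 *v \<alpha>)) - ((1 / sqrt 2) *\<^sub>R (\<alpha> + \<alpha>)) \<bullet> fd1 = 0"
            using BD[OF L2_zero, of \<alpha>] unfolding Uc by simp
          have "((1 / sqrt 2) *\<^sub>R (\<alpha> + \<alpha>)) \<bullet> fd1 = (1 / sqrt 2) * (\<alpha> \<bullet> fd1 + \<alpha> \<bullet> fd1)"
            by (simp only: inner_scaleR_left inner_add_left)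
          also have "\<dots> = ((1 / sqrt 2) * 2) * (\<alpha> \<bullet> fd1)" by simp
          also have "\<dots> = sqrt 2 * (\<alpha> \<bullet> fd1)" by (simp only: two_sqrt)
          finally show ?thesis using h by (simp add: inner_diff_left)
        qed
        define X where "X = (dt / sqrt 2) *\<^sub>R (P1 *v (u1 b - u1 a)) - fd1"
        have "X \<bullet> \<alpha> = 0" for \<alpha>
        proof -
          have sw: "(P1 *v (u1 b - u1 a)) \<bullet> \<alpha> = (u1 b - u1 a) \<bullet> (P1 *v \<alpha>)"
            using inner_P_sym[OF P1_sym, of \<alpha> "u1 b - u1 a"] by (simp add: inner_commute)
          have "X \<bullet> \<alpha> = (dt / sqrt 2) * ((u1 b - u1 a) \<bullet> (P1 *v \<alpha>)) - \<alpha> \<bullet> fd1"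
            by (simp only: X_def inner_diff_left inner_scaleR_left sw inner_commute[of fd1 \<alpha>])
          also have "\<dots> = (1 / sqrt 2) * (dt * ((u1 b - u1 a) \<bullet> (P1 *v \<alpha>))) - \<alpha> \<bullet> fd1"
            by simp
          also have "\<dots> = (1 / sqrt 2) * (sqrt 2 * (\<alpha> \<bullet> fd1)) - \<alpha> \<bullet> fd1" by (simp only: c1)
          also have "\<dots> = 0" by simp
          finally show ?thesis .
        qed
        from this[of X] show ?thesis by (simp add: X_def)
      qed
      have ed1_eq: "ed1 = (1 / sqrt 2) *\<^sub>R (u1 b + u1 a)"
      proof -
        have c2: "(u1 b + u1 a) \<bullet> y = sqrt 2 * (ed1 \<bullet> y)" for y
        proof -
          define \<beta> where "\<beta> = Pi *v y"
          have P\<beta>: "P1 *v \<beta> = y" by (simp add: \<beta>_def matrix_vector_mul_assoc Pi)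
          have L\<beta>: "L2 a b (\<lambda>x. \<beta>)" by (rule L2_cont) simp
          have Ub: "U (\<lambda>x. \<beta>) 0 b = (b - a) *\<^sub>R \<beta>" "U (\<lambda>x. \<beta>) 0 a = 0" using ab by (simp_all add: U_def)
          have "dt * (u1 b \<bullet> (P1 *v ((b - a) *\<^sub>R \<beta>)) - u1 a \<bullet> (P1 *v 0))
            - ed1 \<bullet> ((dt / sqrt 2) *\<^sub>R (P1 *v ((b - a) *\<^sub>R \<beta> - 0)))
            - ((1 / sqrt 2) *\<^sub>R ((b - a) *\<^sub>R \<beta> + 0)) \<bullet> fd1 = 0"
            using BD[OF L\<beta>, of 0] unfolding Ub .
          then have "(b - a) * (dt * (u1 b \<bullet> y) - (dt / sqrt 2) * (ed1 \<bullet> y) - (1 / sqrt 2) * (\<beta> \<bullet> fd1)) = 0"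
            by (simp add: P\<beta> matrix_vector_mult_scaleR algebra_simps diff_divide_distrib)
          then have h: "dt * (u1 b \<bullet> y) - (dt / sqrt 2) * (ed1 \<bullet> y) - (1 / sqrt 2) * (\<beta> \<bullet> fd1) = 0"
            using ab by simp
          have bf: "\<beta> \<bullet> fd1 = (dt / sqrt 2) * (u1 b \<bullet> y - u1 a \<bullet> y)"
            unfolding fd1_eq using inner_P_sym[OF P1_sym, of \<beta> "u1 b - u1 a"]
            by (simp add: P\<beta> inner_diff_left)
          have "u1 b \<bullet> y + u1 a \<bullet> y = sqrt 2 * (ed1 \<bullet> y)"
            by (rule alg2[OF s2 dt]) (use h bf in simp)
          then show ?thesis by (simp add: inner_add_left)
        qed
        define Y where "Y = (1 / sqrt 2) *\<^sub>R (u1 b + u1 a) - ed1"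
        have "Y \<bullet> y = 0" for y
        proof -
          have "Y \<bullet> y = (1 / sqrt 2) * ((u1 b + u1 a) \<bullet> y) - ed1 \<bullet> y"
            by (simp add: Y_def inner_diff_left)
          also have "\<dots> = (1 / sqrt 2) * (sqrt 2 * (ed1 \<bullet> y)) - ed1 \<bullet> y" by (simp only: c2)
          also have "\<dots> = 0" by simp
          finally show ?thesis .
        qed
        from this[of Y] show ?thesis by (simp add: Y_def)
      qed
      show "v \<in> sph_dirac a b P1 P0 H Hs dt"
        unfolding v sph_mem using Lf1 Le1 rep1 af1 fd1_eq ed1_eq ew1 by blast
    qed
  qed
qed

end
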